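(* Let $\sigma>0$ and $\beta(s):=\exp\Big(-\frac{((\log s-\sigma^{2}/2)_{+})^{2}}{2\sigma^{2}}\Big)$ for $s>0$. Let $K(u)=u\beta(1/u)$ for $u>0$, $K(0)=0$, $K^{*}(v)=\sup_{u\ge0}\{uv-K(u)\}$, and $F(w):=\int_{w}^{1}\frac{\mathrm{d}v}{K^{*}(v)}$ for $w\in(0,1]$, with inverse function $F^{-1}$. Then for all $x>0$, \[ F^{-1}(x)\le2\exp\Big\{-\frac{1}{2\sigma^{2}}\mathsf{W}^{2}\Big(\frac{x\sigma^{2}}{2\exp(\sigma^{2}/2)}\Big)\Big\}, \] where $\mathsf{W}$ is the Lambert W function on $[0,\infty)$ (the inverse of $x\mapsto xe^{x}$) and $\mathsf{W}^{2}$ its square.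
   Context: $(t)_{+}=\max(t,0)$. *)

theory Defs
  imports "HOL-Analysis.Analysis"
begin

definition beta_fn :: "real \<Rightarrow> real \<Rightarrow> real" where
  "beta_fn \<sigma> s = exp (- ((max (ln s - \<sigma>^2/2) 0)^2) / (2 * \<sigma>^2))"

definition K_fn :: "real \<Rightarrow> real \<Rightarrow> real" where
  "K_fn \<sigma> u = (if u = 0 then 0 else u * beta_fn \<sigma> (1 / u))"

definition Kstar :: "real \<Rightarrow> real \<Rightarrow> real" where
  "Kstar \<sigma> v = (SUP u\<in>{0..}. u * v - K_fn \<sigma> u)"

definition F_fn :: "real \<Rightarrow> real \<Rightarrow> real" where
  "F_fn \<sigma> w = integral {w..1} (\<lambda>v. 1 / Kstar \<sigma> v)"

definition F_inv :: "real \<Rightarrow> real \<Rightarrow> real" where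
  "F_inv \<sigma> x = inv_into {0<..1} (F_fn \<sigma>) x"

definition lambertW :: "real \<Rightarrow> real" where
  "lambertW y = (THE w. w \<ge> 0 \<and> w * exp w = y)"

end

theory Submission
  imports Defs
begin

definition sfun :: "real \<Rightarrow> real \<Rightarrow> real" where
  "sfun \<sigma> v = \<sigma> * sqrt (2 * ln (2 / v))"

lemma K_nonneg: "u \<ge> 0 \<Longrightarrow> K_fn \<sigma> u \<ge> 0"
  by (simp add: K_fn_def beta_fn_def)

lemma K_big: assumes "u > 1" shows "K_fn \<sigma> u = u"
proof -
  have "ln (1/u) < 0" using assms by simp
  moreover have "\<sigma>^2/2 \<ge> 0" by simp
  ultimately have "max (ln (1/u) - \<sigma>^2/2) 0 = 0" by linarith
  thus ?thesis using assms by (simp add: K_fn_def beta_fn_def)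
qed

lemma Kstar_term_le:
  assumes "0 < v" "v \<le> 1" "u \<ge> 0"
  shows "u * v - K_fn \<sigma> u \<le> v"
proof (cases "u \<le> 1")
  case True
  have "u * v \<le> 1 * v" using assms True by (intro mult_right_mono) auto
  thus ?thesis using K_nonneg[OF assms(3), of \<sigma>] by linarith
next
  case False
  then have "K_fn \<sigma> u = u" by (intro K_big) auto
  moreover have "u * v \<le> u * 1" using assms by (intro mult_left_mono) auto
  ultimately show ?thesis using assms by linarith
qed

lemma Kstar_bdd:
  assumes "0 < v" "v \<le> 1"
  shows "bdd_above ((\<lambda>u. u * v - K_fn \<sigma> u) ` {0..})"
  using Kstar_term_le[OF assms] by (intro bdd_aboveI[where M=v]) auto

lemma Kstar_le: assumes "0 < v" "v \<le> 1" shows "Kstar \<sigma> v \<le> v"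
  unfolding Kstar_def using Kstar_term_le[OF assms] by (intro cSUP_least) auto

lemma Kstar_mono:
  assumes "0 < v" "v \<le> v'" "v' \<le> 1"
  shows "Kstar \<sigma> v \<le> Kstar \<sigma> v'"
  unfolding Kstar_def
proof (rule cSUP_mono)
  show "bdd_above ((\<lambda>u. u * v' - K_fn \<sigma> u) ` {0..})" using assms by (intro Kstar_bdd) auto
  fix n :: real assume "n \<in> {0..}"
  then show "\<exists>m\<in>{0..}. n * v - K_fn \<sigma> n \<le> m * v' - K_fn \<sigma> m"
    using assms by (intro bexI[of _ n]) (auto intro: mult_left_mono)
qed auto

lemma Kstar_lower:
  assumes "\<sigma> > 0" "0 < v" "v \<le> 1"
  shows "v / 2 * exp (- (\<sigma>^2/2)) * exp (- sfun \<sigma> v) \<le> Kstar \<sigma> v"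
proof -
  define s where "s = sfun \<sigma> v"
  define u0 where "u0 = exp (- (\<sigma>^2/2) - s)"
  have l2: "ln (2/v) > 0" using assms by simp
  have s0: "s \<ge> 0" using assms l2 by (simp add: s_def sfun_def)
  have s2: "s^2 = \<sigma>^2 * (2 * ln (2/v))" using l2 by (simp add: s_def sfun_def power_mult_distrib)
  have u0: "u0 > 0" by (simp add: u0_def)
  have "1 / u0 = exp (\<sigma>^2/2 + s)" unfolding u0_def by (simp add: divide_simps flip: exp_add)
  then have "ln (1/u0) - \<sigma>^2/2 = s" by simp
  then have "beta_fn \<sigma> (1/u0) = exp (- (s^2) / (2 * \<sigma>^2))" using s0 by (simp add: beta_fn_def)
  also have "- (s^2) / (2 * \<sigma>^2) = - ln (2/v)" using s2 assms by (simp add: field_simps)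
  also have "exp (- ln (2/v)) = v/2" using assms by (simp add: exp_minus)
  finally have "K_fn \<sigma> u0 = u0 * (v/2)" using u0 by (simp add: K_fn_def)
  moreover have "u0 = exp (- (\<sigma>^2/2)) * exp (- s)" unfolding u0_def by (simp flip: exp_add)
  ultimately have "u0 * v - K_fn \<sigma> u0 = v/2 * exp (- (\<sigma>^2/2)) * exp (- s)"
    by (simp add: algebra_simps)
  moreover have "u0 * v - K_fn \<sigma> u0 \<le> Kstar \<sigma> v"
    unfolding Kstar_def using u0 assms by (intro cSUP_upper Kstar_bdd) auto
  ultimately show ?thesis by (simp add: s_def)
qed

lemma sfun_pos: "\<sigma> > 0 \<Longrightarrow> 0 < v \<Longrightarrow> v < 2 \<Longrightarrow> sfun \<sigma> v > 0"
  by (simp add: sfun_def)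

lemma sfun_deriv:
  assumes "\<sigma> > 0" "0 < v" "v < 2"
  shows "(sfun \<sigma> has_real_derivative (- (\<sigma>^2) / (v * sfun \<sigma> v))) (at v)"
proof -
  have l: "ln (2/v) > 0" using assms by simp
  have "((\<lambda>v. \<sigma> * sqrt (2 * ln (2 / v))) has_real_derivative
     \<sigma> * (inverse (sqrt (2 * ln (2 / v))) / 2 * (2 * (- 2 / v^2 / (2/v))))) (at v)"
    using assms l by (auto intro!: derivative_eq_intros simp: power2_eq_square)
  moreover have "\<sigma> * (inverse (sqrt (2 * ln (2 / v))) / 2 * (2 * (- 2 / v^2 / (2/v))))
      = - (\<sigma>^2) / (v * sfun \<sigma> v)"
    using assms l by (simp add: sfun_def field_simps power2_eq_square)
  ultimately show ?thesis by (simp add: sfun_def[abs_def])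
qed

definition Phi :: "real \<Rightarrow> real \<Rightarrow> real" where
  "Phi \<sigma> v = (2 * exp (\<sigma>^2/2) / \<sigma>^2) * (sfun \<sigma> v - 1) * exp (sfun \<sigma> v)"

lemma g_integral:
  assumes "\<sigma> > 0" "0 < w" "w \<le> 1"
  shows "((\<lambda>v. 2 * exp (\<sigma>^2/2) * exp (sfun \<sigma> v) / v) has_integral (Phi \<sigma> w - Phi \<sigma> 1)) {w..1}"
proof -
  have "((\<lambda>v. 2 * exp (\<sigma>^2/2) * exp (sfun \<sigma> v) / v) has_integral ((- Phi \<sigma> 1) - (- Phi \<sigma> w))) {w..1}"
  proof (rule fundamental_theorem_of_calculus)
    fix v assume v: "v \<in> {w..1}"
    then have v0: "0 < v" "v < 2" using assms by auto
    define C where "C = 2 * exp (\<sigma>^2/2) / \<sigma>^2"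
    have sp: "sfun \<sigma> v > 0" using sfun_pos[OF assms(1) v0] .
    have d: "((\<lambda>v. - (C * (sfun \<sigma> v - 1) * exp (sfun \<sigma> v))) has_real_derivative
        - (C * ((- (\<sigma>^2) / (v * sfun \<sigma> v)) * exp (sfun \<sigma> v) + (sfun \<sigma> v - 1) * (exp (sfun \<sigma> v) * (- (\<sigma>^2) / (v * sfun \<sigma> v)))))) (at v)"
      using sp v0 by (auto intro!: derivative_eq_intros sfun_deriv[OF assms(1) v0] simp: field_simps)
    have e: "- (C * ((- (\<sigma>^2) / (v * sfun \<sigma> v)) * exp (sfun \<sigma> v) + (sfun \<sigma> v - 1) * (exp (sfun \<sigma> v) * (- (\<sigma>^2) / (v * sfun \<sigma> v)))))
       = 2 * exp (\<sigma>^2/2) * exp (sfun \<sigma> v) / v"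
      using sp v0 assms(1) by (simp add: C_def field_simps)
    have "((\<lambda>v. - Phi \<sigma> v) has_real_derivative 2 * exp (\<sigma>^2/2) * exp (sfun \<sigma> v) / v) (at v)"
      using d unfolding e by (simp add: Phi_def C_def mult.assoc)
    then show "((\<lambda>v. - Phi \<sigma> v) has_vector_derivative 2 * exp (\<sigma>^2/2) * exp (sfun \<sigma> v) / v) (at v within {w..1})"
      by (simp add: has_real_derivative_iff_has_vector_derivative has_vector_derivative_at_within)
  qed (use assms in auto)
  then show ?thesis by simp
qed

lemma Kstar_pos: assumes "\<sigma> > 0" "0 < v" "v \<le> 1" shows "Kstar \<sigma> v > 0"
proof -
  have "0 < v / 2 * exp (- (\<sigma>^2/2)) * exp (- sfun \<sigma> v)" using assms by simp
  then show ?thesis using Kstar_lower[OF assms] by linarith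
qed

lemma invK_integrable:
  assumes "\<sigma> > 0" "0 < w" "w \<le> 1"
  shows "(\<lambda>v. 1 / Kstar \<sigma> v) integrable_on {w..1}"
proof -
  have "mono_on {w..1} (\<lambda>v. - (1 / Kstar \<sigma> v))"
  proof (rule monotone_onI)
    fix a b assume ab: "a \<in> {w..1}" "b \<in> {w..1}" "a \<le> b"
    have "Kstar \<sigma> a \<le> Kstar \<sigma> b" using ab assms by (intro Kstar_mono) auto
    moreover have "Kstar \<sigma> a > 0" using ab assms by (intro Kstar_pos) auto
    ultimately have "1 / Kstar \<sigma> b \<le> 1 / Kstar \<sigma> a" by (intro divide_left_mono) auto
    then show "- (1 / Kstar \<sigma> a) \<le> - (1 / Kstar \<sigma> b)" by simp
  qed
  then have "(\<lambda>v. - (1 / Kstar \<sigma> v)) integrable_on {w..1}" by (rule integrable_on_mono_on)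
  then show ?thesis using integrable_neg by fastforce
qed

lemma F_upper:
  assumes "\<sigma> > 0" "0 < w" "w \<le> 1"
  shows "F_fn \<sigma> w \<le> (2 * exp (\<sigma>^2/2) / \<sigma>^2) * sfun \<sigma> w * exp (sfun \<sigma> w)"
proof -
  have "F_fn \<sigma> w \<le> Phi \<sigma> w - Phi \<sigma> 1"
    unfolding F_fn_def
  proof (rule has_integral_le[OF integrable_integral[OF invK_integrable[OF assms]] g_integral[OF assms]])
    fix v assume v: "v \<in> {w..1}"
    then have v0: "0 < v" "v \<le> 1" using assms by auto
    have L: "0 < v / 2 * exp (- (\<sigma>^2/2)) * exp (- sfun \<sigma> v)" using v0 by simp
    have "1 / Kstar \<sigma> v \<le> 1 / (v / 2 * exp (- (\<sigma>^2/2)) * exp (- sfun \<sigma> v))"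
      using Kstar_lower[OF assms(1) v0] L by (intro divide_left_mono) auto
    also have "\<dots> = 2 * exp (\<sigma>^2/2) * exp (sfun \<sigma> v) / v"
      using v0 by (simp add: exp_minus field_simps)
    finally show "1 / Kstar \<sigma> v \<le> 2 * exp (\<sigma>^2/2) * exp (sfun \<sigma> v) / v" .
  qed
  also have "Phi \<sigma> w - Phi \<sigma> 1 \<le> (2 * exp (\<sigma>^2/2) / \<sigma>^2) * sfun \<sigma> w * exp (sfun \<sigma> w)"
  proof -
    define C where "C = 2 * exp (\<sigma>^2/2) / \<sigma>^2"
    define s1 where "s1 = sfun \<sigma> 1"
    define s where "s = sfun \<sigma> w"
    have C: "C > 0" using assms by (simp add: C_def)
    have s0: "s > 0" unfolding s_def using assms by (intro sfun_pos) auto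
    have s10: "s1 \<ge> 0" unfolding s1_def using assms sfun_pos[of \<sigma> 1] by auto
    have key: "(1 - s1) * exp s1 \<le> 1"
    proof -
      have "1 + s1 \<le> exp s1" by (rule exp_ge_add_one_self)
      then have "(1 - s1) * (1 + s1) \<le> (1 - s1) * exp s1 \<or> 1 - s1 < 0" 
        by (auto intro: mult_left_mono)
      moreover have "(1 - s1) * exp (s1) \<le> exp (-s1) * exp s1" 
        using exp_ge_add_one_self[of "-s1"] by (intro mult_right_mono) auto
      then have "(1 - s1) * exp s1 \<le> 1" by (simp flip: exp_add)
      then show ?thesis .
    qed
    have P: "\<And>v. Phi \<sigma> v = C * (sfun \<sigma> v - 1) * exp (sfun \<sigma> v)" by (simp add: Phi_def C_def)
    have "Phi \<sigma> w - Phi \<sigma> 1 = C * (s * exp s - exp s + (1 - s1) * exp s1)"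
      unfolding P s_def s1_def by (simp add: algebra_simps)
    also have "\<dots> \<le> C * (s * exp s)"
    proof -
      have "1 \<le> exp s" using s0 by simp
      then have "s * exp s - exp s + (1 - s1) * exp s1 \<le> s * exp s" using key by linarith
      then show ?thesis using C by (intro mult_left_mono) auto
    qed
    finally show ?thesis by (simp add: C_def s_def mult.assoc)
  qed
  finally show ?thesis .
qed

lemma F_lower:
  assumes "\<sigma> > 0" "0 < w" "w \<le> 1"
  shows "F_fn \<sigma> w \<ge> - ln w"
proof -
  have i: "((\<lambda>v. 1 / v) has_integral (ln 1 - ln w)) {w..1}"
  proof (rule fundamental_theorem_of_calculus)
    fix v assume "v \<in> {w..1}"
    then have "v > 0" using assms by auto
    then have "(ln has_real_derivative 1 / v) (at v)" by (auto intro!: derivative_eq_intros simp: field_simps)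
    then show "(ln has_vector_derivative 1 / v) (at v within {w..1})"
      by (simp add: has_real_derivative_iff_has_vector_derivative has_vector_derivative_at_within)
  qed (use assms in auto)
  have "ln 1 - ln w \<le> F_fn \<sigma> w"
    unfolding F_fn_def
  proof (rule has_integral_le[OF i integrable_integral[OF invK_integrable[OF assms]]])
    fix v assume v: "v \<in> {w..1}"
    then have v0: "0 < v" "v \<le> 1" using assms by auto
    show "1 / v \<le> 1 / Kstar \<sigma> v"
      using Kstar_le[OF v0, of \<sigma>] Kstar_pos[OF assms(1) v0] v0 by (intro divide_left_mono) auto
  qed
  then show ?thesis by simp
qed

lemma xexp_strict: "0 \<le> (a::real) \<Longrightarrow> a < b \<Longrightarrow> a * exp a < b * exp b"
proof -
  assume "0 \<le> a" "a < b"
  then have "a * exp a \<le> a * exp b" by (simp add: mult_left_mono)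
  also have "\<dots> < b * exp b" using \<open>a < b\<close> by (intro mult_strict_right_mono) auto
  finally show ?thesis .
qed

lemma lambertW_prop:
  assumes "y \<ge> 0"
  shows "lambertW y \<ge> 0 \<and> lambertW y * exp (lambertW y) = y"
proof -
  have ex: "\<exists>w. w \<ge> 0 \<and> w * exp w = y"
  proof -
    have "y \<le> y * exp y" using assms by (simp add: mult_le_cancel_left1)
    moreover have "continuous_on {0..y} (\<lambda>t. t * exp t)" by (intro continuous_intros)
    ultimately obtain w where "0 \<le> w" "w \<le> y" "w * exp w = y"
      using IVT'[of "\<lambda>t. t * exp t" 0 y y] assms by auto
    then show ?thesis by blast
  qed
  have "\<exists>!w. w \<ge> 0 \<and> w * exp w = y"
  proof (rule ex_ex1I[OF ex])
    fix a b assume a: "a \<ge> 0 \<and> a * exp a = y" and b: "b \<ge> 0 \<and> b * exp b = y"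
    show "a = b"
    proof (rule ccontr)
      assume "a \<noteq> b"
      then have "a < b \<or> b < a" by linarith
      then show False using xexp_strict[of a b] xexp_strict[of b a] a b by auto
    qed
  qed
  then show ?thesis unfolding lambertW_def by (rule theI')
qed

lemma lambertW_le:
  assumes "y \<ge> 0" "s \<ge> 0" "y \<le> s * exp s"
  shows "lambertW y \<le> s"
proof (rule ccontr)
  assume "\<not> lambertW y \<le> s"
  then have "s * exp s < lambertW y * exp (lambertW y)" using assms by (intro xexp_strict) auto
  then show False using lambertW_prop[OF assms(1)] assms by linarith
qed

theorem lemma54:
  fixes \<sigma> x :: real
  assumes "\<sigma> > 0" and "x > 0"
  shows "F_inv \<sigma> x \<le> 2 * exp (- (1 / (2 * \<sigma>^2)) *
           (lambertW (x * \<sigma>^2 / (2 * exp (\<sigma>^2 / 2))))^2)"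
proof -
  define w0 where "w0 = exp (- (x + 1))"
  have w0: "0 < w0" "w0 \<le> 1" using assms by (auto simp: w0_def)
  have Fw0: "x \<le> F_fn \<sigma> w0" using F_lower[OF assms(1) w0] by (simp add: w0_def)
  have F1: "F_fn \<sigma> 1 \<le> x" using assms by (simp add: F_fn_def)
  have Feq: "F_fn \<sigma> = (\<lambda>w. integral {w..1} (\<lambda>v. 1 / Kstar \<sigma> v))" by (simp add: F_fn_def[abs_def])
  have cont: "continuous_on {w0..1} (F_fn \<sigma>)"
    unfolding Feq by (rule indefinite_integral_continuous_1'[OF invK_integrable[OF assms(1) w0]])
  obtain w where w: "w0 \<le> w" "w \<le> 1" "F_fn \<sigma> w = x"
    using IVT2'[of "F_fn \<sigma>" 1 x w0, OF F1 Fw0 w0(2) cont] by auto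
  then have xin: "x \<in> F_fn \<sigma> ` {0<..1}" using w0 by force
  define z where "z = F_inv \<sigma> x"
  have z: "z \<in> {0<..1}" "F_fn \<sigma> z = x"
    using inv_into_into[OF xin] f_inv_into_f[OF xin] by (auto simp: z_def F_inv_def)
  then have z0: "0 < z" "z \<le> 1" by auto
  define s where "s = sfun \<sigma> z"
  have s0: "s > 0" unfolding s_def using z0 assms by (intro sfun_pos) auto
  have l2: "ln (2/z) > 0" using z0 by simp
  have s2: "s^2 = \<sigma>^2 * (2 * ln (2/z))" using l2 by (simp add: s_def sfun_def power_mult_distrib)
  have "x \<le> (2 * exp (\<sigma>^2/2) / \<sigma>^2) * s * exp s"
    using F_upper[OF assms(1) z0] z(2) by (simp add: s_def)
  then have xs: "x * \<sigma>^2 / (2 * exp (\<sigma>^2 / 2)) \<le> s * exp s"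
    using assms by (simp add: field_simps)
  define W where "W = lambertW (x * \<sigma>^2 / (2 * exp (\<sigma>^2 / 2)))"
  have y0: "x * \<sigma>^2 / (2 * exp (\<sigma>^2 / 2)) \<ge> 0" using assms by simp
  have W0: "W \<ge> 0" using lambertW_prop[OF y0] by (simp add: W_def)
  have Ws: "W \<le> s" unfolding W_def using lambertW_le[OF y0 _ xs] s0 by simp
  have "W^2 \<le> s^2" using W0 Ws by (intro power_mono) auto
  then have "(1 / (2 * \<sigma>^2)) * W^2 \<le> ln (2/z)" using s2 assms by (simp add: field_simps)
  then have "- ln (2/z) \<le> - (1 / (2 * \<sigma>^2)) * W^2" by simp
  then have "exp (- ln (2/z)) \<le> exp (- (1 / (2 * \<sigma>^2)) * W^2)" by simp
  moreover have "exp (- ln (2/z)) = z / 2" using z0 by (simp add: exp_minus)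
  ultimately have "z \<le> 2 * exp (- (1 / (2 * \<sigma>^2)) * W^2)" by simp
  then show ?thesis by (simp add: z_def W_def)
qed

end
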